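(* Let $(V,\omega)=(\mathbb{R}^{2d},\sum_i dx_i\wedge dy_i)$ and $n\ge1$. Identify $(V\times V)^{\times n}$ with $T^*(V^{\times n})$ via, in each factor, $((x,y),(x',y'))\mapsto(q,q',p,p')$ with $q=\tfrac{x+x'}2$, $q'=\tfrac{y+y'}2$, $p=y'-y$, $p'=x-x'$, where $Q=(q,q')\in V$ is the base point and $(p,p')$ the covector. Let $\mathscr{L}=\{(z_1,z_1',\dots,z_n,z_n')\in(V\times V)^{\times n}: z_i'=z_{i+1},\ i=1,\dots,n\}$ with indices mod $n$ ($z_{n+1}=z_1$). Then $\mathscr{L}$ is a Lagrangian subspace of $T^*(V^{\times n})$. If $n$ is odd, $\mathscr{L}$ is the graph of $dF$ for the quadratic function $F(Q_1,\dots,Q_n)=2\sum_{1\le i<j\le n}(-1)^{i+j-1}\omega(Q_i,Q_j)$. If $n$ is even, $\mathscr{L}$ is not given by a generating function (it is not the graph of the differential of a function on $V^{\times n}$).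
   Context: The symplectic form on $(V\times V)^{\times n}$ is $(\omega\ominus\omega)^{\oplus n}$, where $\omega\ominus\omega=dx'\wedge dy'-dx\wedge dy$ on $V\times V$; the identification above is a linear symplectomorphism onto $T^*(V^{\times n})$ with its canonical form $\sum (dq\wedge dp+dq'\wedge dp')$. Here $\omega((x,y),(x',y'))=x\cdot y'-y\cdot x'$. *)

theory Defs
  imports "HOL-Analysis.Analysis"
begin

text \<open>V = R^{2d}: a point of V is a pair (x,y) with x, y in R^d (d = CARD('d)).\<close>
type_synonym 'd V = "(real^'d) \<times> (real^'d)"

definition omega :: "'d::finite V \<Rightarrow> 'd V \<Rightarrow> real" where
  "omega z w = fst z \<bullet> snd w - snd z \<bullet> fst w"

text \<open>Tuples indexed by 0..n-1 are functions on nat that vanish from index n on.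
  A point of T^*(V^n) is a pair (Q,P): Q i = (q_i,q'_i) the base point,
  P i = (p_i,p'_i) the covector (p paired with q, p' paired with q').\<close>
definition Tstar :: "nat \<Rightarrow> ((nat \<Rightarrow> 'd::finite V) \<times> (nat \<Rightarrow> 'd V)) set" where
  "Tstar n = {(Q,P). \<forall>i\<ge>n. Q i = 0 \<and> P i = 0}"

definition can_form :: "nat \<Rightarrow> (nat \<Rightarrow> 'd::finite V) \<times> (nat \<Rightarrow> 'd V)
    \<Rightarrow> (nat \<Rightarrow> 'd V) \<times> (nat \<Rightarrow> 'd V) \<Rightarrow> real" where
  "can_form n u v = (\<Sum>i<n.
      (fst (fst u i) \<bullet> fst (snd v i) - fst (fst v i) \<bullet> fst (snd u i))
    + (snd (fst u i) \<bullet> snd (snd v i) - snd (fst v i) \<bullet> snd (snd u i)))"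

definition lagrangian :: "nat \<Rightarrow> ((nat \<Rightarrow> 'd::finite V) \<times> (nat \<Rightarrow> 'd V)) set \<Rightarrow> bool" where
  "lagrangian n L \<longleftrightarrow>
     L \<subseteq> Tstar n \<and>
     (\<lambda>i. 0, \<lambda>i. 0) \<in> L \<and>
     (\<forall>u\<in>L. \<forall>v\<in>L. (\<lambda>i. fst u i + fst v i, \<lambda>i. snd u i + snd v i) \<in> L) \<and>
     (\<forall>c::real. \<forall>u\<in>L. (\<lambda>i. c *\<^sub>R fst u i, \<lambda>i. c *\<^sub>R snd u i) \<in> L) \<and>
     (\<forall>u\<in>Tstar n. (\<forall>v\<in>L. can_form n u v = 0) \<longleftrightarrow> u \<in> L)"

definition Phi :: "(nat \<Rightarrow> 'd::finite V \<times> 'd V) \<Rightarrow> (nat \<Rightarrow> 'd V) \<times> (nat \<Rightarrow> 'd V)" where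
  "Phi z = ((\<lambda>i. ((1/2) *\<^sub>R (fst (fst (z i)) + fst (snd (z i))),
                  (1/2) *\<^sub>R (snd (fst (z i)) + snd (snd (z i))))),
            (\<lambda>i. (snd (snd (z i)) - snd (fst (z i)),
                  fst (fst (z i)) - fst (snd (z i)))))"

text \<open>The subspace scrL: z'_i = z_{i+1} (indices mod n), written 0-based.\<close>
definition scrL :: "nat \<Rightarrow> (nat \<Rightarrow> 'd::finite V \<times> 'd V) set" where
  "scrL n = {z. (\<forall>i\<ge>n. z i = 0) \<and> (\<forall>i<n. snd (z i) = fst (z (Suc i mod n)))}"

text \<open>Graph of dF for F on V^n: (Q,P) with dF_Q(delta) = sum_i p_i.dq_i + p'_i.dq'_i
  for every tangent vector delta, the differential evaluated as the derivative
  of F along the line Q + t delta.\<close>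
definition graph_dF :: "nat \<Rightarrow> ((nat \<Rightarrow> 'd::finite V) \<Rightarrow> real)
    \<Rightarrow> ((nat \<Rightarrow> 'd V) \<times> (nat \<Rightarrow> 'd V)) set" where
  "graph_dF n F = {(Q,P). (Q,P) \<in> Tstar n \<and>
     (\<forall>\<delta>. (\<forall>i\<ge>n. \<delta> i = 0) \<longrightarrow>
        ((\<lambda>t. F (\<lambda>i. Q i + t *\<^sub>R \<delta> i)) has_real_derivative
           (\<Sum>i<n. fst (P i) \<bullet> fst (\<delta> i) + snd (P i) \<bullet> snd (\<delta> i))) (at 0))}"

text \<open>F(Q_1..Q_n) = 2 sum_{1<=i<j<=n} (-1)^{i+j-1} omega(Q_i,Q_j), written 0-based
  (1-based exponent i+j-1 becomes i+j+1).\<close>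
definition genF :: "nat \<Rightarrow> (nat \<Rightarrow> 'd::finite V) \<Rightarrow> real" where
  "genF n Q = 2 * (\<Sum>j<n. \<Sum>i<j. (-1) ^ (i + j + 1) * omega (Q i) (Q j))"

end

theory Submission
  imports Defs
begin

definition Kop :: "'d::finite V \<Rightarrow> 'd V" where "Kop w = (snd w, - fst w)"

lemma Phi_fst: "fst (Phi z) i = (1/2) *\<^sub>R (fst (z i) + snd (z i))"
  unfolding Phi_def by (simp add: prod_eq_iff)

lemma Phi_snd: "snd (Phi z) i = Kop (snd (z i) - fst (z i))"
  unfolding Phi_def Kop_def by (simp add: prod_eq_iff)

lemma omega_line: "omega (a + t *\<^sub>R b) (c + t *\<^sub>R d) =
   omega a c + t * (omega a d + omega b c) + t^2 * omega b d"
  unfolding omega_def by (simp add: inner_add_left inner_add_right algebra_simps power2_eq_square)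

definition Gd :: "nat \<Rightarrow> (nat \<Rightarrow> 'd::finite V) \<Rightarrow> (nat \<Rightarrow> 'd V) \<Rightarrow> real" where
  "Gd n Q \<delta> = 2 * (\<Sum>j<n. \<Sum>i<j. (-1) ^ (i + j + 1) * (omega (Q i) (\<delta> j) + omega (\<delta> i) (Q j)))"

lemma sum3: "(\<Sum>j<n. \<Sum>i<j. f i j + t * g i j + t^2 * h i j) =
   (\<Sum>j<n. \<Sum>i<j. f i j) + t * (\<Sum>j<n. \<Sum>i<j. g i j) + t^2 * (\<Sum>j<n. \<Sum>i<j. h i j :: real)"
  by (simp add: sum.distrib sum_distrib_left)

lemma genF_line: "genF n (\<lambda>i. Q i + t *\<^sub>R \<delta> i) = genF n Q + t * Gd n Q \<delta> + t^2 * genF n \<delta>"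
proof -
  have e: "\<And>s A B C. (s::real) * (A + t*B + t^2*C) = s*A + t*(s*B) + t^2*(s*C)" by algebra
  show ?thesis
  unfolding genF_def Gd_def omega_line e sum3
  by (simp add: algebra_simps)
qed

lemma genF_deriv: "((\<lambda>t. genF n (\<lambda>i. Q i + t *\<^sub>R \<delta> i)) has_real_derivative Gd n Q \<delta>) (at 0)"
proof -
  have "((\<lambda>t. genF n Q + t * Gd n Q \<delta> + t^2 * genF n \<delta>) has_real_derivative Gd n Q \<delta>) (at 0)"
    by (auto intro!: derivative_eq_intros)
  then show ?thesis unfolding genF_line .
qed

lemma graph_genF: "(Q,P) \<in> graph_dF n (genF n) \<longleftrightarrow> (Q,P) \<in> Tstar n \<and>
   (\<forall>\<delta>. (\<forall>i\<ge>n. \<delta> i = 0) \<longrightarrow> Gd n Q \<delta> = (\<Sum>i<n. fst (P i) \<bullet> fst (\<delta> i) + snd (P i) \<bullet> snd (\<delta> i)))"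
proof -
  have e: "\<And>\<delta> D. ((\<lambda>t. genF n (\<lambda>i. Q i + t *\<^sub>R \<delta> i)) has_real_derivative D) (at 0) \<longleftrightarrow> Gd n Q \<delta> = D"
  proof
    fix \<delta> D assume "((\<lambda>t. genF n (\<lambda>i. Q i + t *\<^sub>R \<delta> i)) has_real_derivative D) (at 0)"
    then show "Gd n Q \<delta> = D" using DERIV_unique[OF genF_deriv] by blast
  next
    fix \<delta> D assume "Gd n Q \<delta> = D"
    then show "((\<lambda>t. genF n (\<lambda>i. Q i + t *\<^sub>R \<delta> i)) has_real_derivative D) (at 0)" 
      using genF_deriv by blast
  qed
  show ?thesis by (simp add: graph_dF_def e)
qed

lemma tele: "m \<le> p \<Longrightarrow> (\<Sum>i=m..<p. ((-1::real)^i) *\<^sub>R (b i + b (Suc i))) =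
   (-1)^m *\<^sub>R b m - (-1)^p *\<^sub>R (b p :: 'a::real_vector)"
proof (induction p rule: dec_induct)
  case base then show ?case by simp
next
  case (step p) then show ?case by (simp add: algebra_simps)
qed

lemma sum_shift_mod: "n \<ge> 1 \<Longrightarrow> (\<Sum>i<n. h (Suc i mod n)) = (\<Sum>i<n. h i)"
proof -
  assume "n \<ge> 1" then obtain m where n: "n = Suc m" by (cases n) auto
  have "(\<Sum>i<Suc m. h (Suc i mod Suc m)) = (\<Sum>i<m. h (Suc i)) + h 0"
    by (simp add: sum.lessThan_Suc)
  also have "\<dots> = (\<Sum>i<Suc m. h i)" by (subst sum.lessThan_Suc_shift) (simp add: add.commute)
  finally show ?thesis using n by simp
qed

lemma Suc_mod_inj: "i < n \<Longrightarrow> k < n \<Longrightarrow> (Suc i mod n = Suc k mod n) = (i = k)"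
  by (cases "Suc i = n"; cases "Suc k = n") auto

lemma omega_sum_left: "omega (\<Sum>i\<in>A. f i) d = (\<Sum>i\<in>A. omega (f i) d)"
  unfolding omega_def by (simp add: fst_sum snd_sum inner_sum_left sum_subtractf)

lemma omega_scale_left: "omega (c *\<^sub>R a) d = c * omega a d"
  unfolding omega_def by (simp add: algebra_simps)

lemma omega_anti: "omega a b = - omega b a"
  unfolding omega_def by (simp add: inner_commute)

lemma restrict_lt: "(j::nat) \<le> n \<Longrightarrow> (\<Sum>i<j. f i) = (\<Sum>i<n. if i<j then f i else (0::'a::comm_monoid_add))"
proof -
  assume "j \<le> n"
  then have "{..<n} \<inter> {i. i < j} = {..<j}" by auto
  then show ?thesis by (simp add: sum.If_cases)
qed

lemma restrict_lt2: "(j::nat) \<le> n \<Longrightarrow> (\<Sum>i<j. f i + g i) =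
   (\<Sum>i<n. if i<j then f i else 0) + (\<Sum>i<n. if i<j then g i else (0::'a::comm_monoid_add))"
proof -
  assume a: "j \<le> n"
  have "(\<Sum>i<j. f i + g i) = (\<Sum>i<j. f i) + (\<Sum>i<j. g i)" by (rule sum.distrib)
  also have "\<dots> = (\<Sum>i<n. if i<j then f i else 0) + (\<Sum>i<n. if i<j then g i else 0)"
    using restrict_lt[OF a, of f] restrict_lt[OF a, of g] by argo
  finally show ?thesis .
qed

definition cc :: "nat \<Rightarrow> nat \<Rightarrow> real" where
  "cc k i = 2 * (-1)^(i+k+1) * (if i<k then 1 else if k<i then -1 else 0)"

definition Rv :: "nat \<Rightarrow> (nat \<Rightarrow> 'd::finite V) \<Rightarrow> nat \<Rightarrow> 'd V" where
  "Rv n Q k = (\<Sum>i<n. cc k i *\<^sub>R Q i)"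

lemma Gd_R: "Gd n Q \<delta> = (\<Sum>k<n. omega (Rv n Q k) (\<delta> k))"
proof -
  have L: "Gd n Q \<delta> = (\<Sum>j<n. \<Sum>i<n. if i<j then 2*(-1)^(i+j+1)* omega (Q i) (\<delta> j) else 0)
     + (\<Sum>j<n. \<Sum>i<n. if i<j then 2*(-1)^(i+j+1)* omega (\<delta> i) (Q j) else 0)"
  proof -
    have "Gd n Q \<delta> = (\<Sum>j<n. \<Sum>i<j. 2*(-1)^(i+j+1)* omega (Q i) (\<delta> j) + 2*(-1)^(i+j+1)* omega (\<delta> i) (Q j))"
      unfolding Gd_def by (simp add: sum_distrib_left algebra_simps)
    also have "\<dots> = (\<Sum>j<n. (\<Sum>i<n. if i<j then 2*(-1)^(i+j+1)* omega (Q i) (\<delta> j) else 0)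
     + (\<Sum>i<n. if i<j then 2*(-1)^(i+j+1)* omega (\<delta> i) (Q j) else 0))"
      apply (rule sum.cong, simp) apply (rule restrict_lt2) by simp
    finally show ?thesis by (simp only: sum.distrib)
  qed
  have R: "(\<Sum>k<n. omega (Rv n Q k) (\<delta> k)) = (\<Sum>k<n. \<Sum>i<n. if i<k then 2*(-1)^(i+k+1)* omega (Q i) (\<delta> k) else 0)
     + (\<Sum>k<n. \<Sum>i<n. if k<i then -(2*(-1)^(i+k+1)* omega (Q i) (\<delta> k)) else 0)"
    unfolding Rv_def omega_sum_left omega_scale_left sum.distrib[symmetric]
    by (rule sum.cong, simp, rule sum.cong) (auto simp: cc_def)
  have S: "(\<Sum>k<n. \<Sum>i<n. if k<i then -(2*(-1)^(i+k+1)* omega (Q i) (\<delta> k)) else 0)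
     = (\<Sum>j<n. \<Sum>i<n. if i<j then 2*(-1)^(i+j+1)* omega (\<delta> i) (Q j) else (0::real))"
    apply (subst sum.swap)
    apply (rule sum.cong, simp, rule sum.cong, simp)
    by (auto simp: add.commute) (metis omega_anti mult_minus_left)
  show ?thesis unfolding L R S ..
qed

lemma Rv_scrL:
  assumes z: "z \<in> scrL n" and on: "odd n" and k: "k < n"
  shows "Rv n (fst (Phi z)) k = fst (z k) - snd (z k)"
proof -
  define b where "b i = fst (z (i mod n))" for i
  have n1: "n \<ge> 1" using on by (cases n) auto
  have zs: "\<And>i. i < n \<Longrightarrow> snd (z i) = fst (z (Suc i mod n))" using z unfolding scrL_def by auto
  have bi: "\<And>i. i < n \<Longrightarrow> b i = fst (z i)" unfolding b_def by simp
  have bS: "\<And>i. i < n \<Longrightarrow> b (Suc i) = snd (z i)" unfolding b_def using zs by simp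
  have bn: "b n = b 0" unfolding b_def by simp
  define g where "g i = ((-1::real)^i) *\<^sub>R (b i + b (Suc i))" for i
  have "Rv n (fst (Phi z)) k = (\<Sum>i<n. (if i<k then (-1::real)^(k+1) *\<^sub>R g i else 0)
       - (if k<i then (-1::real)^(k+1) *\<^sub>R g i else 0))"
    unfolding Rv_def
  proof (rule sum.cong)
    fix i assume i: "i \<in> {..<n}"
    have "fst (Phi z) i = (1/2) *\<^sub>R (b i + b (Suc i))" using i bi bS by (simp add: Phi_fst)
    then show "cc k i *\<^sub>R fst (Phi z) i = (if i<k then (-1::real)^(k+1) *\<^sub>R g i else 0)
       - (if k<i then (-1::real)^(k+1) *\<^sub>R g i else 0)"
      by (auto simp: cc_def g_def power_add)
  qed simp
  also have "\<dots> = (-1::real)^(k+1) *\<^sub>R (\<Sum>i<k. g i) - (-1::real)^(k+1) *\<^sub>R (\<Sum>i\<in>{Suc k..<n}. g i)"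
  proof -
    have A: "(\<Sum>i<n. if i<k then (-1::real)^(k+1) *\<^sub>R g i else 0) = (\<Sum>i<k. (-1::real)^(k+1) *\<^sub>R g i)"
      using restrict_lt[of k n "\<lambda>i. (-1::real)^(k+1) *\<^sub>R g i"] k by simp
    have "{..<n} \<inter> {i. k < i} = {Suc k..<n}" by auto
    then have B: "(\<Sum>i<n. if k<i then (-1::real)^(k+1) *\<^sub>R g i else 0) = (\<Sum>i\<in>{Suc k..<n}. (-1::real)^(k+1) *\<^sub>R g i)"
      by (simp add: sum.If_cases)
    show ?thesis unfolding sum_subtractf A B scaleR_sum_right ..
  qed
  also have "(\<Sum>i<k. g i) = b 0 - (-1::real)^k *\<^sub>R b k"
    using tele[of 0 k b] unfolding g_def by (simp add: lessThan_atLeast0)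
  also have "(\<Sum>i\<in>{Suc k..<n}. g i) = (-1::real)^(Suc k) *\<^sub>R b (Suc k) + b 0"
    using tele[of "Suc k" n b] k on bn unfolding g_def by simp
  also have "(-1::real)^(k+1) *\<^sub>R (b 0 - (-1::real)^k *\<^sub>R b k) - (-1::real)^(k+1) *\<^sub>R ((-1::real)^(Suc k) *\<^sub>R b (Suc k) + b 0)
     = b k - b (Suc k)"
  proof -
    have e1: "(-1::real)^(Suc k) * (-1)^k = -1" by (simp add: minus_one_mult_self)
    have e2: "(-1::real)^(k+1) * (-1)^(Suc k) = 1" by (simp add: minus_one_mult_self)
    show ?thesis by (simp add: scaleR_right_diff_distrib scaleR_right_distrib e1 e2 del: power_Suc)
  qed
  finally show ?thesis using bi bS k by simp
qed

lemma Tstar_Phi: "z \<in> scrL n \<Longrightarrow> Phi z \<in> Tstar n"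
  unfolding scrL_def Tstar_def by (auto simp: Phi_def zero_prod_def)

lemma scrL_graph:
  assumes z: "z \<in> scrL n" and on: "odd n"
  shows "Phi z \<in> graph_dF n (genF n)"
proof -
  have "(fst (Phi z), snd (Phi z)) \<in> graph_dF n (genF n)"
    unfolding graph_genF
  proof (intro conjI allI impI)
    show "(fst (Phi z), snd (Phi z)) \<in> Tstar n" using Tstar_Phi[OF z] by simp
    fix \<delta> :: "nat \<Rightarrow> 'a V"
    have "Gd n (fst (Phi z)) \<delta> = (\<Sum>k<n. omega (fst (z k) - snd (z k)) (\<delta> k))"
      unfolding Gd_R by (rule sum.cong) (simp_all add: Rv_scrL[OF z on])
    also have "\<dots> = (\<Sum>i<n. fst (snd (Phi z) i) \<bullet> fst (\<delta> i) + snd (snd (Phi z) i) \<bullet> snd (\<delta> i))"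
      by (rule sum.cong) (simp_all add: Phi_snd Kop_def omega_def inner_diff_left inner_diff_right inner_commute)
    finally show "Gd n (fst (Phi z)) \<delta> = (\<Sum>i<n. fst (snd (Phi z) i) \<bullet> fst (\<delta> i) + snd (snd (Phi z) i) \<bullet> snd (\<delta> i))" .
  qed
  then show ?thesis by simp
qed

lemma uniqP:
  fixes P P' :: "nat \<Rightarrow> 'd::finite V"
  assumes "\<forall>i\<ge>n. P i = 0" "\<forall>i\<ge>n. P' i = 0"
    and h: "\<forall>\<delta>. (\<forall>i\<ge>n. \<delta> i = 0) \<longrightarrow> (\<Sum>i<n. fst (P i) \<bullet> fst (\<delta> i) + snd (P i) \<bullet> snd (\<delta> i))
         = (\<Sum>i<n. fst (P' i) \<bullet> fst (\<delta> i) + snd (P' i) \<bullet> snd (\<delta> i))"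
  shows "P = P'"
proof -
  define \<delta> where "\<delta> i = (if i < n then P i - P' i else 0)" for i
  have "\<And>i. n \<le> i \<Longrightarrow> \<delta> i = 0" unfolding \<delta>_def by simp
  note h = h[rule_format, of \<delta>, OF this]
  have "(\<Sum>i<n. fst (P i) \<bullet> fst (\<delta> i) + snd (P i) \<bullet> snd (\<delta> i))
         = (\<Sum>i<n. fst (P' i) \<bullet> fst (\<delta> i) + snd (P' i) \<bullet> snd (\<delta> i))"
    by (rule h)
  then have "(\<Sum>i<n. P i \<bullet> \<delta> i) - (\<Sum>i<n. P' i \<bullet> \<delta> i) = 0" by (simp add: inner_prod_def)
  then have "(\<Sum>i<n. (P i - P' i) \<bullet> (P i - P' i)) = 0"
    unfolding sum_subtractf[symmetric] inner_diff_left[symmetric] by (simp add: \<delta>_def)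
  then have "\<forall>i\<in>{..<n}. (P i - P' i) \<bullet> (P i - P' i) = 0"
    by (subst sum_nonneg_eq_0_iff[symmetric]) auto
  then show ?thesis using assms(1,2) by (metis eq_iff_diff_eq_0 inner_eq_zero_iff lessThan_iff not_le ext)
qed

lemma cf_Phi: "can_form n (Phi z) (Phi w) =
   (\<Sum>i<n. omega (snd (z i)) (snd (w i)) - omega (fst (z i)) (fst (w i)))"
  unfolding can_form_def
proof (rule sum.cong)
  fix i
  obtain a b c d where zi: "z i = ((a,b),(c,d))" by (metis prod.collapse)
  obtain e f g h where wi: "w i = ((e,f),(g,h))" by (metis prod.collapse)
  show "fst (fst (Phi z) i) \<bullet> fst (snd (Phi w) i) - fst (fst (Phi w) i) \<bullet> fst (snd (Phi z) i) +
         (snd (fst (Phi z) i) \<bullet> snd (snd (Phi w) i) - snd (fst (Phi w) i) \<bullet> snd (snd (Phi z) i)) =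
         omega (snd (z i)) (snd (w i)) - omega (fst (z i)) (fst (w i))"
    unfolding Phi_def omega_def zi wi
    by (simp add: zi wi inner_add_left inner_add_right inner_diff_left inner_diff_right inner_commute algebra_simps)
qed simp

lemma omega_zero_right [simp]: "omega a 0 = 0"
  unfolding omega_def by simp

lemma omega_diff_left: "omega (a - b) c = omega a c - omega b c"
  unfolding omega_def by (simp add: inner_diff_left)

lemma isotropic:
  assumes n1: "n \<ge> 1" and z: "z \<in> scrL n" and w: "w \<in> scrL n"
  shows "can_form n (Phi z) (Phi w) = 0"
proof -
  have zs: "\<And>i. i < n \<Longrightarrow> snd (z i) = fst (z (Suc i mod n))" using z unfolding scrL_def by auto
  have ws: "\<And>i. i < n \<Longrightarrow> snd (w i) = fst (w (Suc i mod n))" using w unfolding scrL_def by auto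
  have "can_form n (Phi z) (Phi w) = (\<Sum>i<n. omega (fst (z (Suc i mod n))) (fst (w (Suc i mod n))))
       - (\<Sum>i<n. omega (fst (z i)) (fst (w i)))"
    unfolding cf_Phi sum_subtractf by (simp add: zs ws)
  also have "\<dots> = 0" using sum_shift_mod[OF n1, of "\<lambda>i. omega (fst (z i)) (fst (w i))"] by simp
  finally show ?thesis .
qed

lemma omega_nondeg: "(\<forall>c. omega d c = 0) \<Longrightarrow> d = 0"
proof -
  assume "\<forall>c. omega d c = 0"
  then have "omega d (- snd d, fst d) = 0" by blast
  then have "fst d \<bullet> fst d + snd d \<bullet> snd d = 0" by (simp add: omega_def)
  then have "fst d = 0 \<and> snd d = 0"
    by (metis add_nonneg_eq_0_iff inner_eq_zero_iff inner_ge_zero)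
  then show ?thesis by (simp add: prod_eq_iff)
qed

lemma maximal:
  fixes Q P :: "nat \<Rightarrow> 'd::finite V"
  assumes n1: "n \<ge> 1" and u: "(Q,P) \<in> Tstar n"
    and orth: "\<forall>v\<in>Phi ` scrL n. can_form n (Q,P) v = 0"
  shows "(Q,P) \<in> Phi ` scrL n"
proof -
  define \<zeta> where "\<zeta> i = ((fst (Q i) + (1/2) *\<^sub>R snd (P i), snd (Q i) - (1/2) *\<^sub>R fst (P i)),
      (fst (Q i) - (1/2) *\<^sub>R snd (P i), snd (Q i) + (1/2) *\<^sub>R fst (P i)))" for i
  have Pz: "Phi \<zeta> = (Q,P)"
    unfolding Phi_def \<zeta>_def by (simp add: prod_eq_iff fun_eq_iff scaleR_add_right[symmetric])
  have key: "snd (\<zeta> k) = fst (\<zeta> (Suc k mod n))" if k: "k < n" for k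
  proof -
    define m where "m = Suc k mod n"
    have m: "m < n" unfolding m_def using n1 by simp
    have "omega (snd (\<zeta> k) - fst (\<zeta> m)) c = 0" for c
    proof -
      define e where "e j = (if j = m then c else 0)" for j
      define w where "w j = (if j < n then (e j, e (Suc j mod n)) else 0)" for j
      have wL: "w \<in> scrL n" unfolding scrL_def w_def using n1 by auto
      have "can_form n (Phi \<zeta>) (Phi w) = 0" using orth wL Pz by auto
      then have "(\<Sum>i<n. omega (snd (\<zeta> i)) (e (Suc i mod n))) - (\<Sum>i<n. omega (fst (\<zeta> i)) (e i)) = 0"
        unfolding cf_Phi sum_subtractf[symmetric] by (simp add: w_def)
      moreover have "(\<Sum>i<n. omega (snd (\<zeta> i)) (e (Suc i mod n))) = (\<Sum>i<n. if i = k then omega (snd (\<zeta> k)) c else 0)"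
        by (rule sum.cong) (auto simp: e_def m_def Suc_mod_inj k)
      moreover have "(\<Sum>i<n. omega (fst (\<zeta> i)) (e i)) = (\<Sum>i<n. if i = m then omega (fst (\<zeta> m)) c else 0)"
        by (rule sum.cong) (auto simp: e_def)
      ultimately show ?thesis using k m by (simp add: omega_diff_left)
    qed
    then have "snd (\<zeta> k) - fst (\<zeta> m) = 0" using omega_nondeg by blast
    then show ?thesis unfolding m_def by simp
  qed
  have "\<zeta> \<in> scrL n"
    unfolding scrL_def using key u unfolding Tstar_def \<zeta>_def by (auto simp: zero_prod_def)
  then show ?thesis using Pz by force
qed

lemma Phi_add: "Phi (\<lambda>i. z i + w i) = (\<lambda>i. fst (Phi z) i + fst (Phi w) i, \<lambda>i. snd (Phi z) i + snd (Phi w) i)"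
  unfolding Phi_def prod_eq_iff fun_eq_iff by (simp add: scaleR_add_right add_ac)
lemma Phi_scale: "Phi (\<lambda>i. c *\<^sub>R z i) = (\<lambda>i. c *\<^sub>R fst (Phi z) i, \<lambda>i. c *\<^sub>R snd (Phi z) i)"
  unfolding Phi_def prod_eq_iff fun_eq_iff by (simp add: scaleR_add_right scaleR_diff_right)

lemma scrL_add: "z \<in> scrL n \<Longrightarrow> w \<in> scrL n \<Longrightarrow> (\<lambda>i. z i + w i) \<in> scrL n"
  unfolding scrL_def by simp
lemma scrL_scale: "z \<in> scrL n \<Longrightarrow> (\<lambda>i. c *\<^sub>R z i) \<in> scrL n"
  unfolding scrL_def by simp

lemma lagr: "n \<ge> 1 \<Longrightarrow> lagrangian n (Phi ` (scrL n :: (nat \<Rightarrow> 'd::finite V \<times> 'd V) set))"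
  unfolding lagrangian_def
proof (intro conjI ballI allI)
  assume n1: "n \<ge> 1"
  show "Phi ` scrL n \<subseteq> Tstar n" using Tstar_Phi by blast
  have "(\<lambda>i. 0 :: 'd V \<times> 'd V) \<in> scrL n" unfolding scrL_def by simp
  moreover have "Phi (\<lambda>i. 0 :: 'd V \<times> 'd V) = (\<lambda>i. 0, \<lambda>i. 0)" unfolding Phi_def by (simp add: zero_prod_def)
  ultimately show "(\<lambda>i. 0, \<lambda>i. 0) \<in> Phi ` (scrL n :: (nat \<Rightarrow> 'd::finite V \<times> 'd V) set)" by (metis image_eqI)
  fix u v :: "(nat \<Rightarrow> 'd V) \<times> (nat \<Rightarrow> 'd V)"
  assume "u \<in> Phi ` scrL n" "v \<in> Phi ` scrL n"
  then obtain z w where z: "z \<in> scrL n" "u = Phi z" and w: "w \<in> scrL n" "v = Phi w" by blast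
  have A: "(\<lambda>i. z i + w i) \<in> scrL n" using z(1) w(1) by (rule scrL_add)
  have B: "Phi (\<lambda>i. z i + w i) = (\<lambda>i. fst u i + fst v i, \<lambda>i. snd u i + snd v i)"
    unfolding z(2) w(2) by (rule Phi_add)
  show "(\<lambda>i. fst u i + fst v i, \<lambda>i. snd u i + snd v i) \<in> Phi ` scrL n" using B[symmetric] A by (rule image_eqI)
next
  fix c :: real and u :: "(nat \<Rightarrow> 'd V) \<times> (nat \<Rightarrow> 'd V)"
  assume "u \<in> Phi ` scrL n"
  then obtain z where z: "z \<in> scrL n" "u = Phi z" by blast
  have A: "(\<lambda>i. c *\<^sub>R z i) \<in> scrL n" using z(1) by (rule scrL_scale)
  have B: "Phi (\<lambda>i. c *\<^sub>R z i) = (\<lambda>i. c *\<^sub>R fst u i, \<lambda>i. c *\<^sub>R snd u i)"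
    unfolding z(2) by (rule Phi_scale)
  show "(\<lambda>i. c *\<^sub>R fst u i, \<lambda>i. c *\<^sub>R snd u i) \<in> Phi ` scrL n" using B[symmetric] A by (rule image_eqI)
next
  assume n1: "n \<ge> 1"
  fix u :: "(nat \<Rightarrow> 'd V) \<times> (nat \<Rightarrow> 'd V)"
  assume u: "u \<in> Tstar n"
  show "(\<forall>v\<in>Phi ` scrL n. can_form n u v = 0) = (u \<in> Phi ` scrL n)"
  proof
    assume "\<forall>v\<in>Phi ` scrL n. can_form n u v = 0"
    then show "u \<in> Phi ` scrL n" using maximal[OF n1, of "fst u" "snd u"] u by simp
  next
    assume "u \<in> Phi ` scrL n"
    then show "\<forall>v\<in>Phi ` scrL n. can_form n u v = 0" using isotropic[OF n1] by blast
  qed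
qed

lemma odd_case:
  assumes on: "odd n"
  shows "Phi ` (scrL n :: (nat \<Rightarrow> 'd::finite V \<times> 'd V) set) = graph_dF n (genF n)"
proof
  show "Phi ` scrL n \<subseteq> graph_dF n (genF n)" using scrL_graph[OF _ on] by blast
next
  have n1: "n \<ge> 1" using on by (cases n) auto
  show "graph_dF n (genF n) \<subseteq> Phi ` (scrL n :: (nat \<Rightarrow> 'd::finite V \<times> 'd V) set)"
  proof
    fix u :: "(nat \<Rightarrow> 'd V) \<times> (nat \<Rightarrow> 'd V)"
    assume uG: "u \<in> graph_dF n (genF n)"
    obtain Q P where uQP: "u = (Q,P)" by (cases u)
    have G: "(Q,P) \<in> Tstar n" "\<forall>\<delta>. (\<forall>i\<ge>n. \<delta> i = 0) \<longrightarrow> Gd n Q \<delta> = (\<Sum>i<n. fst (P i) \<bullet> fst (\<delta> i) + snd (P i) \<bullet> snd (\<delta> i))"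
      using uG unfolding uQP graph_genF by auto
    define bb where "bb i = (\<Sum>j<n. ((-1::real)^j) *\<^sub>R Q ((i+j) mod n))" for i
    have bsum: "bb i + bb (Suc i mod n) = 2 *\<^sub>R Q i" if i: "i < n" for i
    proof -
      define f where "f j = Q ((i+j) mod n)" for j
      have "bb (Suc i mod n) = (\<Sum>j<n. ((-1::real)^j) *\<^sub>R f (Suc j))"
        unfolding bb_def f_def by (simp add: mod_add_left_eq)
      then have "bb i + bb (Suc i mod n) = (\<Sum>j<n. ((-1::real)^j) *\<^sub>R (f j + f (Suc j)))"
        unfolding bb_def f_def by (simp add: sum.distrib scaleR_add_right)
      also have "\<dots> = f 0 - (-1::real)^n *\<^sub>R f n"
        using tele[of 0 n f] by (simp add: lessThan_atLeast0)
      also have "\<dots> = 2 *\<^sub>R Q i" using on i unfolding f_def by (simp add: scaleR_2)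
      finally show ?thesis .
    qed
    define z where "z i = (if i < n then (bb i, bb (Suc i mod n)) else (0 :: 'd V \<times> 'd V))" for i
    have zL: "z \<in> scrL n" unfolding scrL_def z_def using n1 by auto
    have fz: "fst (Phi z) = Q"
    proof
      fix i show "fst (Phi z) i = Q i"
      proof (cases "i < n")
        case True then show ?thesis unfolding Phi_fst z_def using bsum[OF True] by simp
      next
        case False then show ?thesis using G(1) unfolding Phi_fst z_def Tstar_def by simp
      qed
    qed
    have zG: "(fst (Phi z), snd (Phi z)) \<in> graph_dF n (genF n)" using scrL_graph[OF zL on] by simp
    have G2: "(Q, snd (Phi z)) \<in> Tstar n" "\<forall>\<delta>. (\<forall>i\<ge>n. \<delta> i = 0) \<longrightarrow> Gd n Q \<delta> =
         (\<Sum>i<n. fst (snd (Phi z) i) \<bullet> fst (\<delta> i) + snd (snd (Phi z) i) \<bullet> snd (\<delta> i))"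
      using zG unfolding fz graph_genF by auto
    have "P = snd (Phi z)"
      by (rule uniqP[of n]) (use G G2 in \<open>auto simp: Tstar_def\<close>)
    then have "u = Phi z" unfolding uQP using fz by (metis prod.collapse)
    then show "u \<in> Phi ` scrL n" using zL by blast
  qed
qed

lemma minus_one_mod_even: "even n \<Longrightarrow> (-1::real)^(m mod n) = (-1)^m"
proof -
  assume en: "even n"
  have "(-1::real)^m = (-1)^(n * (m div n) + m mod n)" by (simp only: mult_div_mod_eq)
  also have "\<dots> = ((-1::real)^n)^(m div n) * (-1)^(m mod n)" by (simp only: power_add power_mult)
  also have "\<dots> = (-1)^(m mod n)" using en by simp
  finally show ?thesis by simp
qed

lemma even_case:
  assumes en: "even n" and n1: "n \<ge> 1"
  shows "\<not> (\<exists>F :: (nat \<Rightarrow> 'd::finite V) \<Rightarrow> real. Phi ` (scrL n :: (nat \<Rightarrow> 'd V \<times> 'd V) set) = graph_dF n F)"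
proof
  assume "\<exists>F :: (nat \<Rightarrow> 'd::finite V) \<Rightarrow> real. Phi ` (scrL n :: (nat \<Rightarrow> 'd V \<times> 'd V) set) = graph_dF n F"
  then obtain F :: "(nat \<Rightarrow> 'd V) \<Rightarrow> real" where FL: "Phi ` (scrL n :: (nat \<Rightarrow> 'd V \<times> 'd V) set) = graph_dF n F" by blast
  define c0 :: "'d V" where "c0 = (1, 0)"
  have c0: "c0 \<noteq> 0" unfolding c0_def by (simp add: zero_prod_def vec_eq_iff)
  define z where "z i = (if i < n then (((-1::real)^i) *\<^sub>R c0, ((-1::real)^(Suc i mod n)) *\<^sub>R c0) else (0 :: 'd V \<times> 'd V))" for i
  have zL: "z \<in> scrL n" unfolding scrL_def z_def using n1 by auto
  have fz: "fst (Phi z) = (\<lambda>i. 0)"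
  proof
    fix i show "fst (Phi z) i = 0"
      unfolding Phi_fst z_def using minus_one_mod_even[OF en, of "Suc i"] by simp
  qed
  define P where "P = snd (Phi z)"
  have P0: "P 0 = Kop ((-2) *\<^sub>R c0)"
    unfolding P_def Phi_snd z_def using n1 minus_one_mod_even[OF en, of 1] by (simp add: scaleR_2 algebra_simps)
  have P0nz: "P 0 \<noteq> 0" using c0 unfolding P0 Kop_def by (auto simp: zero_prod_def prod_eq_iff)
  have "((\<lambda>i. 0), P) \<in> graph_dF n F" using zL fz FL unfolding P_def by (metis image_eqI prod.collapse)
  then have g1: "(\<forall>i\<ge>n. P i = 0)" "\<forall>\<delta>. (\<forall>i\<ge>n. \<delta> i = 0) \<longrightarrow>
        ((\<lambda>t. F (\<lambda>i. 0 + t *\<^sub>R \<delta> i)) has_real_derivative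
           (\<Sum>i<n. fst (P i) \<bullet> fst (\<delta> i) + snd (P i) \<bullet> snd (\<delta> i))) (at 0)"
    unfolding graph_dF_def Tstar_def by auto
  have z0: "(\<lambda>i. 0 :: 'd V \<times> 'd V) \<in> scrL n" unfolding scrL_def by simp
  have "Phi (\<lambda>i. 0 :: 'd V \<times> 'd V) = (\<lambda>i. 0, \<lambda>i. 0)" unfolding Phi_def by (simp add: zero_prod_def)
  then have "((\<lambda>i. 0), (\<lambda>i. 0)) \<in> graph_dF n F" using z0 FL by (metis image_eqI)
  then have g2: "\<forall>\<delta>. (\<forall>i\<ge>n. \<delta> i = 0) \<longrightarrow>
        ((\<lambda>t. F (\<lambda>i. 0 + t *\<^sub>R \<delta> i)) has_real_derivative
           (\<Sum>i<n. fst ((\<lambda>i. 0 :: 'd V) i) \<bullet> fst (\<delta> i) + snd ((\<lambda>i. 0 :: 'd V) i) \<bullet> snd (\<delta> i))) (at 0)"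
    unfolding graph_dF_def by auto
  have d1: "((\<lambda>t. F (\<lambda>i. 0 + t *\<^sub>R P i)) has_real_derivative (\<Sum>i<n. P i \<bullet> P i)) (at 0)"
    using g1 by (simp add: inner_prod_def)
  have d2: "((\<lambda>t. F (\<lambda>i. 0 + t *\<^sub>R P i)) has_real_derivative 0) (at 0)"
    using g2 g1(1) by simp
  have "(\<Sum>i<n. P i \<bullet> P i) = 0" using DERIV_unique[OF d1 d2] .
  moreover have "(\<Sum>i<n. P i \<bullet> P i) > 0"
    by (rule sum_pos2[of _ 0]) (use n1 P0nz in auto)
  ultimately show False by simp
qed


theorem mainTheorem11:
  fixes n :: nat
  assumes "n \<ge> 1"
  shows "lagrangian n (Phi ` (scrL n :: (nat \<Rightarrow> 'd::finite V \<times> 'd V) set))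
     \<and> (odd n \<longrightarrow> Phi ` (scrL n :: (nat \<Rightarrow> 'd V \<times> 'd V) set) = graph_dF n (genF n))
     \<and> (even n \<longrightarrow> \<not> (\<exists>F :: (nat \<Rightarrow> 'd V) \<Rightarrow> real.
            Phi ` (scrL n :: (nat \<Rightarrow> 'd V \<times> 'd V) set) = graph_dF n F))"
  using lagr[OF assms] odd_case even_case[OF _ assms] by blast

end
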